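(* Let $\psi_0$ be an eigenfunction of $-\frac12\Delta^\otimes$ (on antisymmetric functions) for the eigenvalue $\omega_0$, whose expansion $\psi_0=\sum_{\overline k}C(\overline k)\Lambda_{j=1}^{\overline N}e^{ik_jx_j}$ satisfies condition (adr), and assume $\int_{\overline{\mathbb T}}|\psi_0(\overline x)|^2d\overline x=Z$. Then the electronic charge density of $\psi_0$ is uniform: $\rho^e(x)=-e\sum_{j=1}^{\overline N}\int_{\mathbb T^{\overline N-1}}|\psi_0(\overline x)|^2\big|_{x_j=x}\prod_{l\ne j}dx_l=-eZ$ for all $x\in\mathbb T$. Equivalently, $\int_{\mathbb T^{\overline N-1}}|\psi_0(\overline x)|^2\big|_{x_1=x}dx_2\cdots dx_{\overline N}=Z/\overline N$ for all $x\in\mathbb T$.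
   Context: Fix $N\in\mathbb N$, $e>0$, $Z>0$. $\mathbb T:=\mathbb R^3/N\mathbb Z^3$, $\overline N:=N^3$, $\overline{\mathbb T}:=\mathbb T^{\overline N}$ with points $\overline x=(x_1,\dots,x_{\overline N})$, $\Xi:=\frac{2\pi}N\mathbb Z^3$, $\Delta^\otimes=\sum_j\Delta_{x_j}$. $\omega_0$ is the minimal eigenvalue of $-\frac12\Delta^\otimes$ on antisymmetric functions on $\overline{\mathbb T}$. The exterior product is $[\Lambda_{j=1}^{\overline N}f_j](\overline x)=\frac1{\sqrt{\overline N!}}\sum_{\pi\in S_{\overline N}}(-1)^{|\pi|}\prod_{j}f_j(x_{\pi(j)})$. Every eigenfunction $\psi_0$ for $\omega_0$ has an expansion $\psi_0=\sum_{\overline k}C(\overline k)\Lambda_{j=1}^{\overline N}e^{ik_jx_j}$ over sets $\overline k=\{k_1,\dots,k_{\overline N}\}$ of distinct $k_j\in\Xi$ with $\frac12\sum_jk_j^2=\omega_0$. Condition (adr): for any two distinct sets $\overline k\neq\overline k'$ with $C(\overline k)\neq0\neq C(\overline k')$ one has $\#(\overline k\setminus\overline k')\ge2$. *)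

theory Defs
  imports "HOL-Analysis.Analysis"
begin

text \<open>The torus T = R^3 / N Z^3 is represented by real^3 (functions on T are
N-periodic functions on real^3); integration over T is Lebesgue measure on the cube
[0,N]^3. Particles are indexed by {..<Nbar} with Nbar = N^3; a configuration is a
function nat => real^3 of which only the values at indices < Nbar matter.\<close>

type_synonym pt = "real^3"
type_synonym config = "nat \<Rightarrow> real^3"

definition Nbar :: "nat \<Rightarrow> nat" where
  "Nbar N = N ^ 3"

definition torus_measure :: "nat \<Rightarrow> pt measure" where
  "torus_measure N = restrict_space lborel (cbox 0 (\<chi> c. real N))"

definition torus_prod :: "nat \<Rightarrow> nat set \<Rightarrow> config measure" where
  "torus_prod N I = PiM I (\<lambda>_. torus_measure N)"

definition period_lattice :: "nat \<Rightarrow> pt set" where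
  "period_lattice N = {v. \<forall>c. \<exists>m::int. v $ c = real N * of_int m}"

definition Xi :: "nat \<Rightarrow> pt set" where
  "Xi N = {k. \<forall>c. \<exists>m::int. k $ c = 2 * pi / real N * of_int m}"

definition dir_line :: "(config \<Rightarrow> complex) \<Rightarrow> nat \<Rightarrow> 3 \<Rightarrow> config \<Rightarrow> real \<Rightarrow> complex" where
  "dir_line \<psi> j c x t = \<psi> (x(j := x j + t *\<^sub>R axis c 1))"

definition laplace_j :: "(config \<Rightarrow> complex) \<Rightarrow> nat \<Rightarrow> config \<Rightarrow> complex" where
  "laplace_j \<psi> j x =
     (\<Sum>c\<in>UNIV. vector_derivative
        (\<lambda>s. vector_derivative (dir_line \<psi> j c x) (at s)) (at 0))"

definition laplace_tensor :: "nat \<Rightarrow> (config \<Rightarrow> complex) \<Rightarrow> config \<Rightarrow> complex" where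
  "laplace_tensor n \<psi> x = (\<Sum>j<n. laplace_j \<psi> j x)"

definition antisym_eigenfunction :: "nat \<Rightarrow> real \<Rightarrow> (config \<Rightarrow> complex) \<Rightarrow> bool" where
  "antisym_eigenfunction N w \<psi> \<longleftrightarrow>
     (\<forall>x y. (\<forall>j<Nbar N. x j = y j) \<longrightarrow> \<psi> x = \<psi> y) \<and>
     (\<forall>x j v. v \<in> period_lattice N \<longrightarrow> \<psi> (x(j := x j + v)) = \<psi> x) \<and>
     (\<forall>x p. p permutes {..<Nbar N} \<longrightarrow> \<psi> (x \<circ> p) = of_int (sign p) * \<psi> x) \<and>
     (\<forall>x j c. j < Nbar N \<longrightarrow>
        (\<forall>s. dir_line \<psi> j c x differentiable (at s)) \<and>
        (\<lambda>s. vector_derivative (dir_line \<psi> j c x) (at s)) differentiable (at 0)) \<and>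
     (\<exists>x. \<psi> x \<noteq> 0) \<and>
     (\<forall>x. - (1/2) * laplace_tensor (Nbar N) \<psi> x = of_real w * \<psi> x)"

definition omega0 :: "nat \<Rightarrow> real" where
  "omega0 N = Inf {w. \<exists>\<psi>. antisym_eigenfunction N w \<psi>}"

definition ext_prod :: "nat \<Rightarrow> (nat \<Rightarrow> pt \<Rightarrow> complex) \<Rightarrow> config \<Rightarrow> complex" where
  "ext_prod n f x = (1 / of_real (sqrt (fact n))) *
     (\<Sum>p\<in>{p. p permutes {..<n}}. of_int (sign p) * (\<Prod>j<n. f j (x (p j))))"

definition plane_wave :: "pt \<Rightarrow> pt \<Rightarrow> complex" where
  "plane_wave k x = cis (k \<bullet> x)"

definition kbar_sets :: "nat \<Rightarrow> real \<Rightarrow> pt set set" where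
  "kbar_sets N w = {K. K \<subseteq> Xi N \<and> card K = Nbar N \<and> (1/2) * (\<Sum>k\<in>K. k \<bullet> k) = w}"

definition adr :: "pt set set \<Rightarrow> (pt set \<Rightarrow> complex) \<Rightarrow> bool" where
  "adr S C \<longleftrightarrow> (\<forall>K\<in>S. \<forall>K'\<in>S. K \<noteq> K' \<and> C K \<noteq> 0 \<and> C K' \<noteq> 0 \<longrightarrow> card (K - K') \<ge> 2)"

definition marginal :: "nat \<Rightarrow> (config \<Rightarrow> complex) \<Rightarrow> nat \<Rightarrow> pt \<Rightarrow> real" where
  "marginal N \<psi> j x =
     integral\<^sup>L (torus_prod N ({..<Nbar N} - {j})) (\<lambda>y. (cmod (\<psi> (y(j := x))))\<^sup>2)"

definition rho_e :: "nat \<Rightarrow> real \<Rightarrow> (config \<Rightarrow> complex) \<Rightarrow> pt \<Rightarrow> real" where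
  "rho_e N e \<psi> x = - e * (\<Sum>j<Nbar N. marginal N \<psi> j x)"

end

theory Submission imports Defs begin

lemma cis_lbint_zero:
  fixes a L :: real
  assumes "a \<noteq> 0" "cis (a*L) = 1" "0 \<le> L"
  shows "integral\<^sup>L lborel (\<lambda>t. indicator {0..L} t *\<^sub>R cis (a*t)) = 0"
proof -
  define F where "F t = cis (a*t) * (- \<i> / of_real a)" for t
  have d: "(F has_vector_derivative cis (a*x)) (at x within A)" for x A
  proof -
    have "((\<lambda>t. cis (a*t)) has_derivative (\<lambda>t. (a*t) *\<^sub>R (\<i> * cis (a*x)))) (at x within A)"
      by (rule has_derivative_cis) (auto intro!: derivative_eq_intros)
    then have "((\<lambda>t. cis (a*t)) has_vector_derivative (a *\<^sub>R (\<i> * cis (a*x)))) (at x within A)"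
      unfolding has_vector_derivative_def by (simp add: mult.commute)
    then have "(F has_vector_derivative (a *\<^sub>R (\<i> * cis (a*x))) * (- \<i> / of_real a)) (at x within A)"
      unfolding F_def by (rule has_vector_derivative_mult_left)
    moreover have "(a *\<^sub>R (\<i> * cis (a*x))) * (- \<i> / of_real a) = cis (a*x)"
      using assms(1) by (simp add: scaleR_conv_of_real field_simps)
    ultimately show ?thesis by simp
  qed
  have "integral\<^sup>L lborel (\<lambda>t. indicator {0..L} t *\<^sub>R cis (a*t)) = F L - F 0"
    by (rule integral_FTC_atLeastAtMost) (auto intro!: continuous_intros d assms)
  also have "\<dots> = 0" using assms by (simp add: F_def)
  finally show ?thesis .
qed

lemma cis_sum: "finite I \<Longrightarrow> cis (sum f I) = (\<Prod>i\<in>I. cis (f i))"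
  by (induction I rule: finite_induct) (auto simp: cis_mult[symmetric])

lemma J_zero:
  fixes v :: pt
  assumes N: "N > 0" and v: "\<forall>c. \<exists>m::int. v $ c = 2 * pi / real N * of_int m" and v0: "v \<noteq> 0"
  shows "integral\<^sup>L (torus_measure N) (\<lambda>z. cis (v \<bullet> z)) = 0"
proof -
  let ?Q = "cbox (0::pt) (\<chi> c. real N)"
  define \<phi> where "\<phi> f = (\<Sum>b\<in>(Basis::pt set). f b *\<^sub>R b)" for f
  interpret P: product_sigma_finite "\<lambda>_::pt. lborel::real measure" by standard
  have phim: "\<phi> \<in> measurable (\<Pi>\<^sub>M b\<in>Basis. lborel) borel"
    unfolding \<phi>_def by measurable
  have in_phi: "\<phi> f \<bullet> b = f b" if "b \<in> Basis" for f b
    using that unfolding \<phi>_def by (simp add: inner_sum_left inner_Basis if_distrib cong: if_cong)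
  have "integral\<^sup>L (torus_measure N) (\<lambda>z. cis (v \<bullet> z))
      = integral\<^sup>L lborel (\<lambda>z. indicator ?Q z *\<^sub>R cis (v \<bullet> z))"
    unfolding torus_measure_def by (rule integral_restrict_space) simp
  also have "\<dots> = integral\<^sup>L (distr (\<Pi>\<^sub>M b\<in>Basis. lborel) borel \<phi>) (\<lambda>z. indicator ?Q z *\<^sub>R cis (v \<bullet> z))"
    unfolding \<phi>_def by (simp flip: lborel_eq)
  also have "\<dots> = integral\<^sup>L (\<Pi>\<^sub>M b\<in>Basis. lborel) (\<lambda>f. indicator ?Q (\<phi> f) *\<^sub>R cis (v \<bullet> \<phi> f))"
  proof (rule integral_distr[OF phim])
    have "(\<lambda>x. cis (v \<bullet> x)) \<in> borel_measurable borel"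
      by (intro borel_measurable_continuous_onI continuous_intros)
    then show "(\<lambda>z. indicator ?Q z *\<^sub>R cis (v \<bullet> z)) \<in> borel_measurable borel"
      by measurable
  qed
  also have "\<dots> = integral\<^sup>L (\<Pi>\<^sub>M b\<in>Basis. lborel) (\<lambda>f. \<Prod>b\<in>Basis. indicator {0..real N} (f b) *\<^sub>R cis ((v \<bullet> b) * f b))"
  proof (rule Bochner_Integration.integral_cong[OF refl])
    fix f :: "pt \<Rightarrow> real"
    have cN: "(\<chi> c. real N) \<bullet> b = real N" if "b \<in> (Basis::pt set)" for b
      using that by (auto simp: Basis_vec_def inner_axis)
    have "indicator ?Q (\<phi> f) = (\<Prod>b\<in>Basis. indicator {0..real N} (f b) :: real)"
    proof (cases "\<forall>b\<in>Basis. f b \<in> {0..real N}")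
      case True
      then have "\<phi> f \<in> ?Q" by (auto simp: mem_box in_phi cN)
      then show ?thesis using True by simp
    next
      case False
      then obtain b where "b \<in> Basis" "f b \<notin> {0..real N}" by blast
      moreover then have "\<phi> f \<notin> ?Q" by (auto simp: mem_box in_phi cN)
      moreover have "(\<Prod>b\<in>Basis. indicator {0..real N} (f b) :: real) = 0"
        using calculation by (intro prod_zero) (auto intro!: bexI[of _ b])
      ultimately show ?thesis by simp
    qed
    moreover have "v \<bullet> \<phi> f = (\<Sum>b\<in>Basis. (v \<bullet> b) * f b)"
      unfolding \<phi>_def by (simp add: inner_sum_right mult.commute)
    ultimately show "indicator ?Q (\<phi> f) *\<^sub>R cis (v \<bullet> \<phi> f) = (\<Prod>b\<in>Basis. indicator {0..real N} (f b) *\<^sub>R cis ((v \<bullet> b) * f b))"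
      by (simp add: cis_sum prod.distrib scaleR_conv_of_real)
  qed
  also have "\<dots> = (\<Prod>b\<in>Basis. integral\<^sup>L lborel (\<lambda>t. indicator {0..real N} t *\<^sub>R cis ((v \<bullet> b) * t)))"
  proof (rule P.product_integral_prod)
    fix b :: pt
    show "integrable lborel (\<lambda>t. indicator {0..real N} t *\<^sub>R cis ((v \<bullet> b) * t))"
    proof -
      have "continuous_on {0..real N} (\<lambda>t. cis ((v \<bullet> b) * t))"
        by (intro continuous_intros)
      from borel_integrable_atLeastAtMost'[OF this] show ?thesis
        by (simp add: set_integrable_def)
    qed
  qed simp
  also have "\<dots> = 0"
  proof -
    obtain c where c: "v $ c \<noteq> 0" using v0 by (metis vec_eq_iff zero_index)
    obtain m :: int where m: "v $ c = 2 * pi / real N * of_int m" using v by blast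
    have b: "axis c 1 \<in> (Basis::pt set)" by (simp add: Basis_vec_def) blast
    have "v \<bullet> axis c 1 = v $ c" by (simp add: inner_axis)
    have "v $ c * real N = 2 * pi * of_int m"
      using N m by (simp add: field_simps)
    then have "cis (v $ c * real N) = 1"
      by (simp del: of_int_mult)
    have "integral\<^sup>L lborel (\<lambda>t. indicator {0..real N} t *\<^sub>R cis ((v \<bullet> axis c 1) * t)) = 0"
      using cis_lbint_zero[of "v $ c" "real N"] c \<open>v \<bullet> axis c 1 = v $ c\<close> \<open>cis (v $ c * real N) = 1\<close> by simp
    then show ?thesis using b by (intro prod_zero) auto
  qed
  finally show ?thesis .
qed

definition J :: "nat \<Rightarrow> pt \<Rightarrow> complex" where
  "J N v = integral\<^sup>L (torus_measure N) (\<lambda>z. cis (v \<bullet> z))"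

lemma torus_space: "space (torus_measure N) = cbox 0 (\<chi> c. real N)"
  unfolding torus_measure_def by (simp add: space_restrict_space)

lemma torus_vol: "measure (torus_measure N) (space (torus_measure N)) = real N ^ 3"
proof -
  have "measure (torus_measure N) (space (torus_measure N)) = measure lborel (cbox (0::pt) (\<chi> c. real N))"
    unfolding torus_space unfolding torus_measure_def by (simp add: measure_restrict_space)
  also have "\<dots> = (\<Prod>b\<in>(Basis::pt set). ((\<chi> c. real N) - 0) \<bullet> b)"
    by (rule measure_lborel_cbox) (auto simp: Basis_vec_def inner_axis)
  also have "\<dots> = (\<Prod>b\<in>(Basis::pt set). real N)"
    by (rule prod.cong) (auto simp: Basis_vec_def inner_axis)
  also have "\<dots> = real N ^ 3" by simp
  finally show ?thesis .
qed

lemma torus_fin: "finite_measure (torus_measure N)"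
proof (rule finite_measureI)
  show "emeasure (torus_measure N) (space (torus_measure N)) \<noteq> \<infinity>"
    unfolding torus_space unfolding torus_measure_def
    by (simp add: emeasure_restrict_space emeasure_lborel_cbox_eq)
qed

lemma cis_meas: "(\<lambda>z. cis (v \<bullet> z)) \<in> borel_measurable (torus_measure N)"
proof -
  have "(\<lambda>x. cis (v \<bullet> x)) \<in> borel_measurable borel"
    by (intro borel_measurable_continuous_onI continuous_intros)
  then show ?thesis unfolding torus_measure_def
    by (intro measurable_restrict_space1) simp
qed

lemma cis_integrable: "integrable (torus_measure N) (\<lambda>z. cis (v \<bullet> z))"
proof -
  interpret finite_measure "torus_measure N" by (rule torus_fin)
  show ?thesis by (rule integrable_const_bound[where B=1]) (auto intro: cis_meas)
qed

lemma J0: "J N 0 = of_real (real N ^ 3)"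
  unfolding J_def using torus_vol[of N] by (simp add: scaleR_conv_of_real)

lemma prod_sf: "product_sigma_finite (\<lambda>_::nat. torus_measure N)"
  unfolding product_sigma_finite_def using torus_fin[of N]
  by (simp add: finite_measure_def)

lemma int_prod:
  assumes "finite I"
  shows "integral\<^sup>L (torus_prod N I) (\<lambda>y. \<Prod>l\<in>I. cis (d l \<bullet> y l)) = (\<Prod>l\<in>I. J N (d l))"
proof -
  interpret product_sigma_finite "\<lambda>_::nat. torus_measure N" by (rule prod_sf)
  show ?thesis unfolding torus_prod_def J_def
    by (rule product_integral_prod[OF assms cis_integrable])
qed

lemma integrable_prod:
  assumes "finite I"
  shows "integrable (torus_prod N I) (\<lambda>y. \<Prod>l\<in>I. cis (d l \<bullet> y l))"
proof -
  interpret product_sigma_finite "\<lambda>_::nat. torus_measure N" by (rule prod_sf)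
  show ?thesis unfolding torus_prod_def
    by (rule product_integrable_prod[OF assms cis_integrable])
qed

lemma key_comb:
  fixes e e' :: "nat \<Rightarrow> pt"
  assumes j: "j < n" and bK: "bij_betw e {..<n} K" and bK': "bij_betw e' {..<n} K'"
    and p: "p permutes {..<n}" and q: "q permutes {..<n}"
    and eq: "\<forall>l\<in>{..<n}-{j}. e (inv p l) = e' (inv q l)"
    and adr: "K \<noteq> K' \<Longrightarrow> card (K - K') \<ge> 2"
    and ee: "K = K' \<Longrightarrow> e' = e"
  shows "K = K' \<and> p = q"
proof -
  have ip: "inv p permutes {..<n}" and iq: "inv q permutes {..<n}"
    using p q by (auto intro: permutes_inv)
  have "K - K' \<subseteq> {e (inv p j)}"
  proof
    fix k assume k: "k \<in> K - K'"
    then obtain i where i: "i < n" "k = e i" using bK by (auto simp: bij_betw_def)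
    have l: "p i < n" using permutes_in_image[OF p, of i] i by simp
    have "inv p (p i) = i" using p by (simp add: permutes_inverses(2))
    show "k \<in> {e (inv p j)}"
    proof (cases "p i = j")
      case True then show ?thesis using i \<open>inv p (p i) = i\<close> by simp
    next
      case False
      then have "e (inv p (p i)) = e' (inv q (p i))" using eq l by auto
      moreover have "inv q (p i) < n" using permutes_in_image[OF iq, of "p i"] l by simp
      ultimately have "k \<in> K'" using i \<open>inv p (p i) = i\<close> bK' by (auto simp: bij_betw_def)
      then show ?thesis using k by simp
    qed
  qed
  then have "card (K - K') \<le> 1" by (metis card.empty card.insert card_mono empty_iff finite.emptyI finite.insertI One_nat_def)
  then have KK: "K = K'" using adr by fastforce
  have inj: "inj_on e {..<n}" using bK by (simp add: bij_betw_def)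
  have eqi: "inv p l = inv q l" if "l < n" "l \<noteq> j" for l
  proof -
    have "e (inv p l) = e (inv q l)" using eq that KK ee by auto
    moreover have "inv p l < n" "inv q l < n"
      using permutes_in_image[OF ip, of l] permutes_in_image[OF iq, of l] that by auto
    ultimately show ?thesis using inj ee KK by (metis inj_onD lessThan_iff)
  qed
  have eqj: "inv p j = inv q j"
  proof (rule ccontr)
    assume ne: "inv p j \<noteq> inv q j"
    have lt: "inv q j < n" using permutes_in_image[OF iq, of j] j by simp
    define l where "l = p (inv q j)"
    have ll: "l < n" using permutes_in_image[OF p, of "inv q j"] lt l_def by simp
    have ipl: "inv p l = inv q j" unfolding l_def using p by (simp add: permutes_inverses(2))
    show False
    proof (cases "l = j")
      case True then show False using ne ipl by simp
    next
      case False
      then have "inv q l = inv q j" using eqi[OF ll] ipl by simp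
      then have "l = j" using permutes_inj[OF iq] by (metis injD)
      then show False using False by simp
    qed
  qed
  have "inv p = inv q"
  proof
    fix l show "inv p l = inv q l"
    proof (cases "l < n")
      case True then show ?thesis using eqi eqj by (cases "l = j") auto
    next
      case False
      then show ?thesis using permutes_not_in[OF ip, of l] permutes_not_in[OF iq, of l] by simp
    qed
  qed
  then have "p = q" using permutes_inv_inv[OF p] permutes_inv_inv[OF q] by metis
  then show ?thesis using KK by simp
qed

lemma int_sum_prod:
  assumes "finite T" "finite I"
  shows "integral\<^sup>L (torus_prod N I) (\<lambda>y. \<Sum>t\<in>T. b t * (\<Prod>l\<in>I. cis (d t l \<bullet> y l)))
       = (\<Sum>t\<in>T. b t * (\<Prod>l\<in>I. J N (d t l)))"
proof -
  have "integral\<^sup>L (torus_prod N I) (\<lambda>y. \<Sum>t\<in>T. b t * (\<Prod>l\<in>I. cis (d t l \<bullet> y l)))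
      = (\<Sum>t\<in>T. integral\<^sup>L (torus_prod N I) (\<lambda>y. b t * (\<Prod>l\<in>I. cis (d t l \<bullet> y l))))"
    by (rule Bochner_Integration.integral_sum) (auto intro!: integrable_mult_right integrable_prod assms)
  also have "\<dots> = (\<Sum>t\<in>T. b t * (\<Prod>l\<in>I. J N (d t l)))"
    by (simp add: int_prod assms)
  finally show ?thesis .
qed

lemma int_marg:
  assumes "finite T" "j < n"
  shows "integral\<^sup>L (torus_prod N ({..<n}-{j})) (\<lambda>y. \<Sum>t\<in>T. b t * (\<Prod>l<n. cis (d t l \<bullet> (y(j:=x)) l)))
       = (\<Sum>t\<in>T. (b t * cis (d t j \<bullet> x)) * (\<Prod>l\<in>{..<n}-{j}. J N (d t l)))"
proof -
  have "(\<Prod>l<n. cis (d t l \<bullet> (y(j:=x)) l)) = cis (d t j \<bullet> x) * (\<Prod>l\<in>{..<n}-{j}. cis (d t l \<bullet> y l))" for t y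
  proof -
    have "(\<Prod>l<n. cis (d t l \<bullet> (y(j:=x)) l)) = cis (d t j \<bullet> (y(j:=x)) j) * (\<Prod>l\<in>{..<n}-{j}. cis (d t l \<bullet> (y(j:=x)) l))"
      using assms by (intro prod.remove) auto
    also have "\<dots> = cis (d t j \<bullet> x) * (\<Prod>l\<in>{..<n}-{j}. cis (d t l \<bullet> y l))"
      by (auto intro!: prod.cong)
    finally show ?thesis .
  qed
  then have "integral\<^sup>L (torus_prod N ({..<n}-{j})) (\<lambda>y. \<Sum>t\<in>T. b t * (\<Prod>l<n. cis (d t l \<bullet> (y(j:=x)) l)))
    = integral\<^sup>L (torus_prod N ({..<n}-{j})) (\<lambda>y. \<Sum>t\<in>T. (b t * cis (d t j \<bullet> x)) * (\<Prod>l\<in>{..<n}-{j}. cis (d t l \<bullet> y l)))"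
    by (simp add: mult.assoc)
  also have "\<dots> = (\<Sum>t\<in>T. (b t * cis (d t j \<bullet> x)) * (\<Prod>l\<in>{..<n}-{j}. J N (d t l)))"
    by (rule int_sum_prod) (use assms in auto)
  finally show ?thesis .
qed

lemma Jval:
  assumes N: "N > 0" and a: "a \<in> Xi N" and b: "b \<in> Xi N"
  shows "J N (a - b) = (if a = b then of_real (real N ^ 3) else 0)"
proof (cases "a = b")
  case True then show ?thesis using J0 by simp
next
  case False
  have "\<forall>c. \<exists>m::int. (a - b) $ c = 2 * pi / real N * of_int m"
  proof
    fix c
    obtain m1 m2 :: int where "a $ c = 2 * pi / real N * of_int m1" "b $ c = 2 * pi / real N * of_int m2"
      using a b unfolding Xi_def by blast
    then have "(a - b) $ c = 2 * pi / real N * of_int (m1 - m2)" by (simp add: right_diff_distrib)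
    then show "\<exists>m::int. (a - b) $ c = 2 * pi / real N * of_int m" by blast
  qed
  then show ?thesis using False J_zero[OF N] unfolding J_def by simp
qed

definition bb :: "(pt set \<Rightarrow> complex) \<Rightarrow> nat \<Rightarrow> (pt set \<times> (nat \<Rightarrow> nat)) \<times> (pt set \<times> (nat \<Rightarrow> nat)) \<Rightarrow> complex" where
  "bb C n t = C (fst (fst t)) * cnj (C (fst (snd t))) * of_real ((1 / sqrt (fact n))^2)
     * of_int (sign (snd (fst t)) * sign (snd (snd t)))"

definition dd :: "(pt set \<Rightarrow> nat \<Rightarrow> pt) \<Rightarrow> (pt set \<times> (nat \<Rightarrow> nat)) \<times> (pt set \<times> (nat \<Rightarrow> nat)) \<Rightarrow> nat \<Rightarrow> pt" where
  "dd enum t l = enum (fst (fst t)) (inv (snd (fst t)) l) - enum (fst (snd t)) (inv (snd (snd t)) l)"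

lemma ext_prod_rw:
  "ext_prod n (\<lambda>j. plane_wave (e j)) y =
     of_real (1 / sqrt (fact n)) * (\<Sum>p\<in>{p. p permutes {..<n}}. of_int (sign p) * (\<Prod>l<n. cis (e (inv p l) \<bullet> y l)))"
proof -
  have "(\<Prod>j<n. plane_wave (e j) (y (p j))) = (\<Prod>l<n. cis (e (inv p l) \<bullet> y l))" if p: "p permutes {..<n}" for p
  proof -
    have "(\<Prod>l<n. cis (e (inv p l) \<bullet> y l)) = (\<Prod>j<n. ((\<lambda>l. cis (e (inv p l) \<bullet> y l)) \<circ> p) j)"
      by (rule prod.permute[OF p])
    also have "\<dots> = (\<Prod>j<n. plane_wave (e j) (y (p j)))"
      using p by (simp add: plane_wave_def permutes_inverses(2))
    finally show ?thesis by simp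
  qed
  then show ?thesis unfolding ext_prod_def
    by (simp add: of_real_divide)
qed

lemma expand:
  fixes \<psi> :: "config \<Rightarrow> complex"
  assumes S: "finite S"
    and ex: "\<forall>x. \<psi> x = (\<Sum>K\<in>S. C K * ext_prod n (\<lambda>j. plane_wave (enum K j)) x)"
  shows "\<psi> y * cnj (\<psi> y) = (\<Sum>t\<in>(S \<times> {p. p permutes {..<n}}) \<times> (S \<times> {p. p permutes {..<n}}).
             bb C n t * (\<Prod>l<n. cis (dd enum t l \<bullet> y l)))"
proof -
  let ?P = "{p. p permutes {..<n}}"
  let ?c = "1 / sqrt (fact n) :: real"
  define A where "A u = C (fst u) * of_real ?c * of_int (sign (snd u)) * (\<Prod>l<n. cis (enum (fst u) (inv (snd u) l) \<bullet> y l))" for u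
  have fP: "finite ?P" by (simp add: finite_permutations)
  have "\<psi> y = (\<Sum>K\<in>S. \<Sum>p\<in>?P. A (K, p))"
    unfolding ex[rule_format] ext_prod_rw A_def by (simp add: sum_distrib_left mult.assoc)
  also have "\<dots> = (\<Sum>u\<in>S \<times> ?P. A u)"
    by (rule sum.cartesian_product'[symmetric])
  finally have psi: "\<psi> y = (\<Sum>u\<in>S \<times> ?P. A u)" .
  have "\<psi> y * cnj (\<psi> y) = (\<Sum>u\<in>S \<times> ?P. \<Sum>u'\<in>S \<times> ?P. A u * cnj (A u'))"
    unfolding psi by (simp add: sum_product)
  also have "\<dots> = (\<Sum>t\<in>(S \<times> ?P) \<times> (S \<times> ?P). A (fst t) * cnj (A (snd t)))"
    by (simp add: sum.cartesian_product')
  also have "\<dots> = (\<Sum>t\<in>(S \<times> ?P) \<times> (S \<times> ?P). bb C n t * (\<Prod>l<n. cis (dd enum t l \<bullet> y l)))"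
  proof (rule sum.cong[OF refl])
    fix t :: "(pt set \<times> (nat \<Rightarrow> nat)) \<times> (pt set \<times> (nat \<Rightarrow> nat))"
    have "(\<Prod>l<n. cis (enum (fst (fst t)) (inv (snd (fst t)) l) \<bullet> y l)) * cnj (\<Prod>l<n. cis (enum (fst (snd t)) (inv (snd (snd t)) l) \<bullet> y l))
        = (\<Prod>l<n. cis (dd enum t l \<bullet> y l))"
      by (simp add: prod.distrib[symmetric] cis_cnj cis_mult dd_def inner_diff_left)
    moreover have "A (fst t) * cnj (A (snd t)) = bb C n t * ((\<Prod>l<n. cis (enum (fst (fst t)) (inv (snd (fst t)) l) \<bullet> y l)) * cnj (\<Prod>l<n. cis (enum (fst (snd t)) (inv (snd (snd t)) l) \<bullet> y l)))"
      unfolding A_def bb_def by (simp only: complex_cnj_mult complex_cnj_complex_of_real complex_cnj_of_int of_int_mult of_real_mult power2_eq_square mult_ac)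
    ultimately show "A (fst t) * cnj (A (snd t)) = bb C n t * (\<Prod>l<n. cis (dd enum t l \<bullet> y l))"
      by simp
  qed
  finally show ?thesis .
qed

lemma term_eq:
  assumes N: "N > 0" and j: "j < n"
   and enumS: "\<forall>K\<in>S. bij_betw (enum K) {..<n} K" and XiS: "\<forall>K\<in>S. K \<subseteq> Xi N" and adrS: "adr S C"
   and t: "t \<in> (S \<times> {p. p permutes {..<n}}) \<times> (S \<times> {p. p permutes {..<n}})"
   and X: "dd enum t j = 0 \<Longrightarrow> X = X0"
  shows "bb C n t * X * (\<Prod>l\<in>{..<n}-{j}. J N (dd enum t l)) =
    (if fst t = snd t then of_real ((cmod (C (fst (fst t))))\<^sup>2 * (1 / sqrt (fact n))\<^sup>2) * X0 * of_real (real N ^ 3) ^ (n - 1) else 0)"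
proof -
  obtain K p K' q where tt: "t = ((K, p), (K', q))" by (metis prod.collapse)
  have K: "K \<in> S" "K' \<in> S" and p: "p permutes {..<n}" and q: "q permutes {..<n}" using t tt by auto
  have Jd: "J N (dd enum t l) = (if dd enum t l = 0 then of_real (real N ^ 3) else 0)" if l: "l < n" for l
  proof -
    have "inv p l < n" "inv q l < n"
      using permutes_in_image[OF permutes_inv[OF p], of l] permutes_in_image[OF permutes_inv[OF q], of l] l by auto
    then have "enum K (inv p l) \<in> Xi N" "enum K' (inv q l) \<in> Xi N"
      using enumS XiS K by (auto simp: bij_betw_def)
    from Jval[OF N this] show ?thesis by (simp add: dd_def tt)
  qed
  show ?thesis
  proof (cases "fst t = snd t")
    case True
    then have KK: "K' = K" "q = p" using tt by auto
    have d0: "dd enum t l = 0" for l by (simp add: dd_def tt KK)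
    have "(\<Prod>l\<in>{..<n}-{j}. J N (dd enum t l)) = (\<Prod>l\<in>{..<n}-{j}. of_real (real N ^ 3))"
      using Jd d0 by (intro prod.cong) auto
    also have "\<dots> = of_real (real N ^ 3) ^ (n - 1)" using j by simp
    finally have pr: "(\<Prod>l\<in>{..<n}-{j}. J N (dd enum t l)) = of_real (real N ^ 3) ^ (n - 1)" .
    have "bb C n t = of_real ((cmod (C K))\<^sup>2 * (1 / sqrt (fact n))\<^sup>2)"
      unfolding bb_def tt KK by (simp add: complex_norm_square[symmetric] del: of_real_power)
    then show ?thesis using True pr X d0 tt by simp
  next
    case False
    have "bb C n t * X * (\<Prod>l\<in>{..<n}-{j}. J N (dd enum t l)) = 0"
    proof (cases "C K = 0 \<or> C K' = 0")
      case True then show ?thesis by (auto simp: bb_def tt)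
    next
      case CC: False
      have "\<exists>l\<in>{..<n}-{j}. dd enum t l \<noteq> 0"
      proof (rule ccontr)
        assume "\<not> ?thesis"
        then have "\<forall>l\<in>{..<n}-{j}. enum K (inv p l) = enum K' (inv q l)" by (auto simp: dd_def tt)
        moreover have "K \<noteq> K' \<Longrightarrow> card (K - K') \<ge> 2" using adrS CC K unfolding adr_def by blast
        ultimately have "K = K' \<and> p = q"
          using key_comb[OF j, of "enum K" K "enum K'" K' p q] enumS K p q by auto
        then show False using False tt by simp
      qed
      then obtain l where l: "l \<in> {..<n}-{j}" "dd enum t l \<noteq> 0" by blast
      then have "J N (dd enum t l) = 0" using Jd by auto
      then have "(\<Prod>l\<in>{..<n}-{j}. J N (dd enum t l)) = 0" using l by (intro prod_zero) auto
      then show ?thesis by simp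
    qed
    then show ?thesis using False by simp
  qed
qed

lemma sum_delta_T:
  fixes g :: "'a \<Rightarrow> complex"
  assumes "finite S" "finite P"
  shows "(\<Sum>t\<in>(S \<times> P) \<times> (S \<times> P). if fst t = snd t then g (fst (fst t)) else 0) = of_nat (card P) * (\<Sum>K\<in>S. g K)"
proof -
  have "(\<Sum>t\<in>(S \<times> P) \<times> (S \<times> P). if fst t = snd t then g (fst (fst t)) else 0)
      = (\<Sum>u\<in>S \<times> P. \<Sum>u'\<in>S \<times> P. if u = u' then g (fst u) else 0)"
    by (simp only: sum.cartesian_product' fst_conv snd_conv)
  also have "\<dots> = (\<Sum>u\<in>S \<times> P. g (fst u))"
    using assms by (intro sum.cong refl) (simp add: sum.delta)
  also have "\<dots> = (\<Sum>K\<in>S. \<Sum>p\<in>P. g K)"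
    by (simp add: sum.cartesian_product')
  also have "\<dots> = of_nat (card P) * (\<Sum>K\<in>S. g K)"
    by (simp add: sum_distrib_left)
  finally show ?thesis .
qed

theorem lemma4p1:
  fixes N :: nat and e Z :: real
    and \<psi>0 :: "config \<Rightarrow> complex"
    and C :: "pt set \<Rightarrow> complex"
    and enum :: "pt set \<Rightarrow> nat \<Rightarrow> pt"
  assumes "N > 0" and "e > 0" and "Z > 0"
    and eig: "antisym_eigenfunction N (omega0 N) \<psi>0"
    and enum: "\<forall>K\<in>kbar_sets N (omega0 N). bij_betw (enum K) {..<Nbar N} K"
    and expansion: "\<forall>x. \<psi>0 x = (\<Sum>K\<in>kbar_sets N (omega0 N).
                       C K * ext_prod (Nbar N) (\<lambda>j. plane_wave (enum K j)) x)"
    and adr: "adr (kbar_sets N (omega0 N)) C"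
    and norm: "integral\<^sup>L (torus_prod N {..<Nbar N}) (\<lambda>y. (cmod (\<psi>0 y))\<^sup>2) = Z"
  shows "(\<forall>x. rho_e N e \<psi>0 x = - e * Z) \<and> (\<forall>x. marginal N \<psi>0 0 x = Z / real (Nbar N))"
proof -
  define n where "n = Nbar N"
  define S where "S = kbar_sets N (omega0 N)"
  define P where "P = {p. p permutes {..<n}}"
  define T where "T = (S \<times> P) \<times> (S \<times> P)"
  define V where "V = real N ^ 3"
  define c where "c = (1 / sqrt (fact n))\<^sup>2"
  define W where "W = (\<Sum>K\<in>S. (cmod (C K))\<^sup>2)"
  have n0: "n > 0" using \<open>N > 0\<close> by (simp add: n_def Nbar_def)
  have Vn: "V = real n" by (simp add: V_def n_def Nbar_def)
  have finP: "finite P" unfolding P_def by (simp add: finite_permutations)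
  have cardP: "card P = fact n" unfolding P_def by (rule card_permutations) auto
  have cf: "c * fact n = 1" unfolding c_def by (simp add: power_divide)
  have enumS: "\<forall>K\<in>S. bij_betw (enum K) {..<n} K" using enum by (simp add: S_def n_def)
  have XiS: "\<forall>K\<in>S. K \<subseteq> Xi N" by (simp add: S_def kbar_sets_def)
  have adrS: "adr S C" using adr by (simp add: S_def)
  have ex: "\<forall>x. \<psi>0 x = (\<Sum>K\<in>S. C K * ext_prod n (\<lambda>j. plane_wave (enum K j)) x)"
    using expansion by (simp add: S_def n_def)
  have finS: "finite S"
  proof (rule ccontr)
    assume "infinite S"
    then have "\<psi>0 y = 0" for y using ex by simp
    then have "Z = 0" using norm by simp
    then show False using \<open>Z > 0\<close> by simp
  qed
  have sq: "complex_of_real ((cmod (\<psi>0 y))\<^sup>2) = (\<Sum>t\<in>T. bb C n t * (\<Prod>l<n. cis (dd enum t l \<bullet> y l)))" for y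
    unfolding complex_norm_square T_def P_def by (rule expand[OF finS ex])
  have finT: "finite T" unfolding T_def using finS finP by simp
  have delta: "(\<Sum>t\<in>T. if fst t = snd t then of_real ((cmod (C (fst (fst t))))\<^sup>2 * c) * X0 * of_real V ^ (n - 1) else 0)
      = of_real W * X0 * of_real V ^ (n - 1)" for X0 :: complex
  proof -
    have "(\<Sum>t\<in>T. if fst t = snd t then of_real ((cmod (C (fst (fst t))))\<^sup>2 * c) * X0 * of_real V ^ (n - 1) else 0)
        = of_nat (card P) * (\<Sum>K\<in>S. of_real ((cmod (C K))\<^sup>2 * c) * X0 * of_real V ^ (n - 1))"
      unfolding T_def using sum_delta_T[OF finS finP, of "\<lambda>K. of_real ((cmod (C K))\<^sup>2 * c) * X0 * of_real V ^ (n - 1)"] by simp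
    also have "\<dots> = of_real (c * fact n) * (\<Sum>K\<in>S. of_real ((cmod (C K))\<^sup>2)) * X0 * of_real V ^ (n - 1)"
      by (simp add: cardP sum_distrib_left sum_distrib_right mult_ac)
    also have "\<dots> = of_real W * X0 * of_real V ^ (n - 1)"
      by (simp add: cf W_def)
    finally show ?thesis .
  qed
  have marg: "marginal N \<psi>0 j x = W * V ^ (n - 1)" if j: "j < n" for j x
  proof -
    have "complex_of_real (marginal N \<psi>0 j x)
        = integral\<^sup>L (torus_prod N ({..<n}-{j})) (\<lambda>y. \<Sum>t\<in>T. bb C n t * (\<Prod>l<n. cis (dd enum t l \<bullet> (y(j:=x)) l)))"
      unfolding marginal_def n_def[symmetric] by (simp only: integral_complex_of_real[symmetric] sq)
    also have "\<dots> = (\<Sum>t\<in>T. (bb C n t * cis (dd enum t j \<bullet> x)) * (\<Prod>l\<in>{..<n}-{j}. J N (dd enum t l)))"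
      by (rule int_marg[OF finT j])
    also have "\<dots> = (\<Sum>t\<in>T. if fst t = snd t then of_real ((cmod (C (fst (fst t))))\<^sup>2 * c) * 1 * of_real V ^ (n - 1) else 0)"
      unfolding c_def V_def
      by (intro sum.cong refl term_eq[OF \<open>N > 0\<close> j enumS XiS adrS]) (auto simp: T_def P_def)
    also have "\<dots> = of_real (W * V ^ (n - 1))" unfolding delta by simp
    finally show ?thesis by (simp only: of_real_eq_iff)
  qed
  have full: "Z = W * V ^ n"
  proof -
    have "complex_of_real Z = integral\<^sup>L (torus_prod N {..<n}) (\<lambda>y. \<Sum>t\<in>T. bb C n t * (\<Prod>l<n. cis (dd enum t l \<bullet> y l)))"
      unfolding norm[symmetric] n_def[symmetric] by (simp only: integral_complex_of_real[symmetric] sq)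
    also have "\<dots> = (\<Sum>t\<in>T. bb C n t * (\<Prod>l<n. J N (dd enum t l)))"
      by (rule int_sum_prod[OF finT]) simp
    also have "\<dots> = (\<Sum>t\<in>T. (bb C n t * J N (dd enum t 0)) * (\<Prod>l\<in>{..<n}-{0}. J N (dd enum t l)))"
      using n0 by (intro sum.cong refl) (simp add: prod.remove[of "{..<n}" 0] mult.assoc)
    also have "\<dots> = (\<Sum>t\<in>T. if fst t = snd t then of_real ((cmod (C (fst (fst t))))\<^sup>2 * c) * of_real V * of_real V ^ (n - 1) else 0)"
      unfolding c_def V_def
      by (intro sum.cong refl term_eq[OF \<open>N > 0\<close> n0 enumS XiS adrS]) (auto simp: T_def P_def J0)
    also have "\<dots> = of_real (W * V ^ n)" unfolding delta using n0
      by (simp add: mult.assoc power_eq_if[of _ n])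
    finally show ?thesis by (simp only: of_real_eq_iff)
  qed
  have Vpos: "V > 0" using \<open>N > 0\<close> by (simp add: V_def)
  have mZ: "marginal N \<psi>0 j x = Z / real (Nbar N)" if "j < n" for j x
    using marg[OF that] full Vpos n0 Vn[symmetric] unfolding n_def[symmetric]
    by (simp add: power_eq_if[of _ n] field_simps)
  have "rho_e N e \<psi>0 x = - e * Z" for x
    unfolding rho_e_def n_def[symmetric] using mZ n0 by (simp add: n_def)
  then show ?thesis using mZ n0 by simp
qed

end
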